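(* Let $Z$ be a metric space, $I=[0,1]$, and $H:I\times I\to Z$ a function such that $H|_{I\times\{0,1\}}$ is continuous. Let $\{(a_i,b_i)\}_i$ be a collection of pairwise disjoint open intervals in $I$ such that $\operatorname{diam}\bigl(H([a_i,b_i]\times I)\bigr)\to0$. Suppose that $H$ is constant on $\{t\}\times I$ for every $t\notin\bigcup_i(a_i,b_i)$, and that $H$ is continuous on each $[a_i,b_i]\times I$. Then $H$ is continuous. *)

theory Defs
  imports "HOL-Analysis.Analysis"
begin

end

theory Submission
  imports Defs
begin

lemma unif_piece:
  fixes H :: "real \<times> real \<Rightarrow> 'z::metric_space"
  assumes c: "continuous_on ({\<alpha>..\<beta>} \<times> {0..1}) H" and t: "t \<in> {\<alpha>..\<beta>}"
    and z: "\<forall>s\<in>{0..1}. H (t, s) = z" and e: "e > 0"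
  shows "\<exists>d>0. \<forall>t'\<in>{\<alpha>..\<beta>}. \<forall>s'\<in>{0..1::real}. \<bar>t' - t\<bar> < d \<longrightarrow> dist (H (t', s')) z < e"
proof -
  have "uniformly_continuous_on ({\<alpha>..\<beta>} \<times> {0..1::real}) H"
    using c by (intro compact_uniformly_continuous) (auto intro: compact_Times)
  then obtain d where d: "d > 0" and dd: "\<And>x x'. x \<in> {\<alpha>..\<beta>} \<times> {0..1} \<Longrightarrow> x' \<in> {\<alpha>..\<beta>} \<times> {0..1}
      \<Longrightarrow> dist x' x < d \<Longrightarrow> dist (H x') (H x) < e"
    unfolding uniformly_continuous_on_def using e by metis
  show ?thesis
  proof (intro exI[of _ d] conjI ballI impI d)
    fix t' s' assume t': "t' \<in> {\<alpha>..\<beta>}" and s': "s' \<in> {0..1::real}" and lt: "\<bar>t' - t\<bar> < d"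
    have "dist (t', s') (t, s') = \<bar>t' - t\<bar>" by (simp add: dist_Pair_Pair dist_real_def)
    hence "dist (H (t', s')) (H (t, s')) < e" using dd[of "(t, s')" "(t', s')"] t t' s' lt by auto
    thus "dist (H (t', s')) z < e" using z s' by simp
  qed
qed

lemma away_piece:
  fixes t :: real
  assumes "t \<notin> {\<alpha>..\<beta>}"
  shows "\<exists>d>0. \<forall>t'\<in>{\<alpha>..\<beta>}. \<not> \<bar>t' - t\<bar> < d"
proof (cases "t < \<alpha>")
  case True thus ?thesis by (intro exI[of _ "\<alpha> - t"]) auto
next
  case False thus ?thesis using assms by (intro exI[of _ "t - \<beta>"]) auto
qed

theorem lemma2p7:
  fixes H :: "real \<times> real \<Rightarrow> 'z::metric_space"
    and J :: "'i set" and a b :: "'i \<Rightarrow> real"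
  assumes cont_ends: "continuous_on ({0..1} \<times> {0, 1}) H"
    and intervals: "\<And>i. i \<in> J \<Longrightarrow> 0 \<le> a i \<and> a i < b i \<and> b i \<le> 1"
    and disjoint: "\<And>i j. i \<in> J \<Longrightarrow> j \<in> J \<Longrightarrow> i \<noteq> j \<Longrightarrow>
                     {a i<..<b i} \<inter> {a j<..<b j} = {}"
    and diam_to_0: "\<And>e. e > 0 \<Longrightarrow>
                     finite {i \<in> J. diameter (H ` ({a i..b i} \<times> {0..1})) \<ge> e}"
    and const_off: "\<And>t. t \<in> {0..1} \<Longrightarrow> t \<notin> (\<Union>i\<in>J. {a i<..<b i}) \<Longrightarrow>
                     \<exists>z. \<forall>s\<in>{0..1}. H (t, s) = z"
    and cont_on: "\<And>i. i \<in> J \<Longrightarrow> continuous_on ({a i..b i} \<times> {0..1}) H"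
  shows "continuous_on ({0..1} \<times> {0..1}) H"
  unfolding continuous_on_iff
proof (intro ballI allI impI)
  fix x e assume x: "x \<in> {0..1::real} \<times> {0..1::real}" and e: "(e::real) > 0"
  obtain t s where xts: "x = (t, s)" by fastforce
  have t01: "t \<in> {0..1}" and s01: "s \<in> {0..1}" using x xts by auto
  have dfst: "\<And>t' s'. dist (t', s') (t, s) < d \<Longrightarrow> \<bar>t' - t\<bar> < d" for d
    by (metis dist_fst_le dist_real_def fst_conv order.strict_trans1)
  show "\<exists>d>0. \<forall>x'\<in>{0..1} \<times> {0..1}. dist x' x < d \<longrightarrow> dist (H x') (H x) < e"
  proof (cases "t \<in> (\<Union>i\<in>J. {a i<..<b i})")
    case True
    then obtain i where i: "i \<in> J" "t \<in> {a i<..<b i}" by auto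
    from cont_on[OF i(1)] have "\<forall>x'\<in>{a i..b i} \<times> {0..1}. dist x' x < d \<longrightarrow> dist (H x') (H x) < e"
      if "d \<le> d0" "\<forall>x'\<in>{a i..b i} \<times> {0..1}. dist x' x < d0 \<longrightarrow> dist (H x') (H x) < e" for d d0
      using that by auto
    obtain d0 where d0: "d0 > 0" "\<forall>x'\<in>{a i..b i} \<times> {0..1}. dist x' x < d0 \<longrightarrow> dist (H x') (H x) < e"
      using cont_on[OF i(1)] e x xts i unfolding continuous_on_iff by fastforce
    define d where "d = min d0 (min (t - a i) (b i - t))"
    have "d > 0" using d0 i by (auto simp: d_def)
    moreover have "\<forall>x'\<in>{0..1} \<times> {0..1}. dist x' x < d \<longrightarrow> dist (H x') (H x) < e"
    proof (intro ballI impI)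
      fix x' assume x': "x' \<in> {0..1::real} \<times> {0..1::real}" and lt: "dist x' x < d"
      obtain t' s' where x'ts: "x' = (t', s')" by fastforce
      have "\<bar>t' - t\<bar> < d" using dfst lt x'ts xts by auto
      hence "t' \<in> {a i..b i}" by (auto simp: d_def)
      thus "dist (H x') (H x) < e" using d0 x' x'ts lt by (auto simp: d_def)
    qed
    ultimately show ?thesis by blast
  next
    case False
    then obtain z where z: "\<forall>s\<in>{0..1}. H (t, s) = z" using const_off t01 by blast
    define F where "F = {i \<in> J. diameter (H ` ({a i..b i} \<times> {0..1})) \<ge> e/2}"
    have finF: "finite F" using diam_to_0[of "e/2"] e by (simp add: F_def)
    have "\<forall>i\<in>F. \<exists>d>0. \<forall>t'\<in>{a i..b i}. \<forall>s'\<in>{0..1::real}. \<bar>t' - t\<bar> < d \<longrightarrow> dist (H (t', s')) z < e"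
    proof
      fix i assume "i \<in> F"
      hence iJ: "i \<in> J" by (simp add: F_def)
      show "\<exists>d>0. \<forall>t'\<in>{a i..b i}. \<forall>s'\<in>{0..1::real}. \<bar>t' - t\<bar> < d \<longrightarrow> dist (H (t', s')) z < e"
      proof (cases "t \<in> {a i..b i}")
        case True
        thus ?thesis using unif_piece[OF cont_on[OF iJ] True z e] by blast
      next
        case False
        thus ?thesis using away_piece[OF False] by blast
      qed
    qed
    then obtain dd where dd: "\<And>i. i \<in> F \<Longrightarrow> dd i > 0"
      "\<And>i t' s'. i \<in> F \<Longrightarrow> t' \<in> {a i..b i} \<Longrightarrow> s' \<in> {0..1::real} \<Longrightarrow> \<bar>t' - t\<bar> < dd i \<Longrightarrow> dist (H (t', s')) z < e"
      by metis
    have "(t, 0) \<in> {0..1} \<times> {0, 1::real}" using t01 by auto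
    then obtain d0 where d0: "d0 > 0" "\<forall>y\<in>{0..1} \<times> {0, 1::real}. dist y (t, 0) < d0 \<longrightarrow> dist (H y) (H (t, 0)) < e/2"
      using cont_ends e unfolding continuous_on_iff by (metis half_gt_zero)
    define d where "d = Min (insert d0 (dd ` F))"
    have dpos: "d > 0" using finF d0 dd by (auto simp: d_def)
    have dle0: "d \<le> d0" and dlei: "\<And>i. i \<in> F \<Longrightarrow> d \<le> dd i" using finF by (auto simp: d_def)
    have "\<forall>x'\<in>{0..1} \<times> {0..1}. dist x' x < d \<longrightarrow> dist (H x') (H x) < e"
    proof (intro ballI impI)
      fix x' assume x': "x' \<in> {0..1::real} \<times> {0..1::real}" and lt: "dist x' x < d"
      obtain t' s' where x'ts: "x' = (t', s')" by fastforce
      have t'01: "t' \<in> {0..1}" and s'01: "s' \<in> {0..1}" using x' x'ts by auto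
      have tt: "\<bar>t' - t\<bar> < d" using dfst lt x'ts xts by auto
      have Hx: "H x = z" using z s01 xts by simp
      have near0: "dist (H (t', 0)) z < e/2"
      proof -
        have "dist (t', 0::real) (t, 0) < d0" using tt dle0 by (simp add: dist_Pair_Pair dist_real_def)
        thus ?thesis using d0(2) t'01 z by auto
      qed
      show "dist (H x') (H x) < e"
      proof (cases "\<exists>i\<in>F. t' \<in> {a i..b i}")
        case True
        then obtain i where "i \<in> F" "t' \<in> {a i..b i}" by blast
        thus ?thesis using dd(2)[of i t' s'] dlei[of i] tt s'01 x'ts Hx by auto
      next
        case nF: False
        show ?thesis
        proof (cases "t' \<in> (\<Union>i\<in>J. {a i<..<b i})")
          case True
          then obtain j where j: "j \<in> J" "t' \<in> {a j<..<b j}" by auto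
          have jF: "j \<notin> F" using nF j by auto
          hence dj: "diameter (H ` ({a j..b j} \<times> {0..1})) < e/2" using j by (auto simp: F_def)
          have "compact (H ` ({a j..b j} \<times> {0..1::real}))"
            using cont_on[OF j(1)] by (intro compact_continuous_image) (auto intro: compact_Times)
          hence bd: "bounded (H ` ({a j..b j} \<times> {0..1::real}))" by (rule compact_imp_bounded)
          have "dist (H (t', s')) (H (t', 0)) \<le> diameter (H ` ({a j..b j} \<times> {0..1}))"
            using j s'01 by (intro diameter_bounded_bound[OF bd]) auto
          hence "dist (H (t', s')) z < e" using dj near0 dist_triangle[of "H (t', s')" z "H (t', 0)"] by linarith
          thus ?thesis using x'ts Hx by simp
        next
          case False
          then obtain w where "\<forall>s\<in>{0..1}. H (t', s) = w" using const_off t'01 by blast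
          hence "H (t', s') = H (t', 0)" using s'01 by auto
          thus ?thesis using near0 x'ts Hx e by simp
        qed
      qed
    qed
    thus ?thesis using dpos by blast
  qed
qed

end
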